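(* Let $\mathfrak{g}$ be a finite-dimensional real Lie algebra and let $\mathcal{A}^{(3)}_{\mathfrak{g}}$ be a Darboux family for $V^{(3)}_{\mathfrak{g}}$ on $\Lambda^3\mathfrak{g}$. Then the space of functions $\mathcal{A}:=\{g\in C^\infty(\Lambda^2\mathfrak{g}): g(r)=f([r,r])\ \forall r,\ f\in\mathcal{A}^{(3)}_{\mathfrak{g}}\}$ is a Darboux family for $V_{\mathfrak{g}}$ on $\Lambda^2\mathfrak{g}$. If moreover $\mathcal{A}^{(3)}_{\mathfrak{g}}$ is a linear Darboux family, then $\mathcal{A}$ is a linear Darboux family.
   Context: $[\cdot,\cdot]$ denotes the algebraic Schouten bracket on $\Lambda\mathfrak{g}$ (the graded extension of the Lie bracket, given on decomposables by $[X_1\wedge\dots\wedge X_s,Y_1\wedge\dots\wedge Y_l]=\sum_{i,j}(-1)^{i+j}[X_i,Y_j]\wedge X_1\wedge\dots\widehat{X_i}\dots\wedge X_s\wedge Y_1\wedge\dots\widehat{Y_j}\dots\wedge Y_l$), so $[r,r]\in\Lambda^3\mathfrak{g}$ for $r\in\Lambda^2\mathfrak{g}$. $V_{\mathfrak{g}}$ (resp. $V^{(3)}_{\mathfrak{g}}$) is the Lie algebra of fundamental vector fields of the action $T\mapsto\Lambda^2T$ (resp. $T\mapsto\Lambda^3T$) of $\mathrm{Aut}(\mathfrak{g})$ on $\Lambda^2\mathfrak{g}$ (resp. $\Lambda^3\mathfrak{g}$), i.e. the vector fields $w\mapsto (\Lambda^2d)(w)$ (resp. $(\Lambda^3d)(w)$),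 $d\in\mathfrak{der}(\mathfrak{g})$. A Darboux family for a Lie algebra $V$ of vector fields on $M$ is a finite-dimensional space $\mathcal{A}=\langle f_1,\dots,f_s\rangle$ of smooth functions with $Xf_j=\sum_i h^i_{jX}f_i$, $h^i_{jX}\in C^\infty(M)$, for all $X\in V$; it is linear if all cofactors $h^i_{jX}$ can be taken constant. *)

theory Defs
  imports "HOL-Analysis.Analysis"
begin

text \<open>The finite-dimensional real Lie algebra g is realised (after choosing a
basis indexed by the finite type 'n) as real^'n with a bilinear, antisymmetric bracket
satisfying the Jacobi identity. The exterior powers are identified with antisymmetric
tensors: X1 wedge ... wedge Xk corresponds to the signed sum over permutations of
X_s(1) tensor ... tensor X_s(k). Bivectors are antisymmetric matrices real^'n^'n,
trivectors are totally antisymmetric elements of real^'n^'n^'n.\<close>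

definition lie_algebra :: "(real^'n \<Rightarrow> real^'n \<Rightarrow> real^'n) \<Rightarrow> bool" where
  "lie_algebra br \<longleftrightarrow> bilinear br \<and> (\<forall>x y. br x y = - br y x) \<and>
     (\<forall>x y z. br x (br y z) + br y (br z x) + br z (br x y) = 0)"

definition derivation :: "(real^'n \<Rightarrow> real^'n \<Rightarrow> real^'n) \<Rightarrow> (real^'n \<Rightarrow> real^'n) \<Rightarrow> bool" where
  "derivation br d \<longleftrightarrow> linear d \<and> (\<forall>x y. d (br x y) = br (d x) y + br x (d y))"

definition Lambda2 :: "(real^'n^'n) set" where
  "Lambda2 = {r. \<forall>i j. r$i$j = - r$j$i}"

definition Lambda3 :: "(real^'n^'n^'n) set" where
  "Lambda3 = {T. \<forall>i j k. T$i$j$k = - T$j$i$k \<and> T$i$j$k = - T$i$k$j}"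

text \<open>Induced action of an endomorphism d on 2- and 3-tensors (derivation extension).\<close>
definition lam2 :: "(real^'n \<Rightarrow> real^'n) \<Rightarrow> real^'n^'n \<Rightarrow> real^'n^'n" where
  "lam2 d r = (\<chi> i j. (\<Sum>a\<in>UNIV. (d (axis a 1))$i * r$a$j) + (\<Sum>b\<in>UNIV. r$i$b * (d (axis b 1))$j))"

definition lam3 :: "(real^'n \<Rightarrow> real^'n) \<Rightarrow> real^'n^'n^'n \<Rightarrow> real^'n^'n^'n" where
  "lam3 d T = (\<chi> i j k. (\<Sum>a\<in>UNIV. (d (axis a 1))$i * T$a$j$k)
                       + (\<Sum>b\<in>UNIV. (d (axis b 1))$j * T$i$b$k)
                       + (\<Sum>c\<in>UNIV. (d (axis c 1))$k * T$i$j$c))"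

definition Vg :: "(real^'n \<Rightarrow> real^'n \<Rightarrow> real^'n) \<Rightarrow> (real^'n^'n \<Rightarrow> real^'n^'n) set" where
  "Vg br = {lam2 d | d. derivation br d}"

definition Vg3 :: "(real^'n \<Rightarrow> real^'n \<Rightarrow> real^'n) \<Rightarrow> (real^'n^'n^'n \<Rightarrow> real^'n^'n^'n) set" where
  "Vg3 br = {lam3 d | d. derivation br d}"

text \<open>Antisymmetrisation of a 3-tensor (image of X wedge Y wedge Z is alt3 of X tensor Y tensor Z).\<close>
definition alt3 :: "real^'n^'n^'n \<Rightarrow> real^'n^'n^'n" where
  "alt3 T = (\<chi> x y z. T$x$y$z - T$x$z$y - T$y$x$z + T$y$z$x + T$z$x$y - T$z$y$x)"

text \<open>If r = sum r_ab e_a tensor e_b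
(i.e. r corresponds to (1/2) sum r_ab e_a wedge e_b), then
[r,r] = sum_{a,b,c,d} r_ab r_cd [e_a,e_c] wedge e_b wedge e_d.\<close>
definition schouten_rr :: "(real^'n \<Rightarrow> real^'n \<Rightarrow> real^'n) \<Rightarrow> real^'n^'n \<Rightarrow> real^'n^'n^'n" where
  "schouten_rr br r = alt3 (\<chi> k b d. \<Sum>a\<in>UNIV. \<Sum>c\<in>UNIV. r$a$b * r$c$d * (br (axis a 1) (axis c 1))$k)"

primrec Ck :: "nat \<Rightarrow> ('a::euclidean_space \<Rightarrow> real) \<Rightarrow> bool" where
  "Ck 0 f = continuous_on UNIV f"
| "Ck (Suc k) f = ((\<forall>x. f differentiable (at x)) \<and>
                    (\<forall>v. Ck k (\<lambda>x. frechet_derivative f (at x) v)))"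

definition Cinf :: "('a::euclidean_space \<Rightarrow> real) \<Rightarrow> bool" where
  "Cinf f \<longleftrightarrow> (\<forall>k. Ck k f)"

text \<open>Smooth functions on a linear subspace M: restrictions of smooth functions.
Functions on M are represented by ambient functions; only their values on M matter.\<close>
definition smooth_on :: "'a::euclidean_space set \<Rightarrow> ('a \<Rightarrow> real) \<Rightarrow> bool" where
  "smooth_on M f \<longleftrightarrow> (\<exists>F. Cinf F \<and> (\<forall>x\<in>M. F x = f x))"

definition vf_apply :: "('a::euclidean_space \<Rightarrow> 'a) \<Rightarrow> ('a \<Rightarrow> real) \<Rightarrow> 'a \<Rightarrow> real" where
  "vf_apply X f x = deriv (\<lambda>t. f (x + t *\<^sub>R X x)) 0"

definition darboux_family ::
  "'a::euclidean_space set \<Rightarrow> ('a \<Rightarrow> 'a) set \<Rightarrow> ('a \<Rightarrow> real) set \<Rightarrow> bool" where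
  "darboux_family M V A \<longleftrightarrow> (\<exists>fs::('a \<Rightarrow> real) list.
     (\<forall>f\<in>set fs. smooth_on M f) \<and>
     A = {g. smooth_on M g \<and> (\<exists>c::nat \<Rightarrow> real. \<forall>x\<in>M. g x = (\<Sum>i<length fs. c i * (fs!i) x))} \<and>
     (\<forall>X\<in>V. \<forall>j<length fs. \<exists>h::nat \<Rightarrow> 'a \<Rightarrow> real.
        (\<forall>i<length fs. smooth_on M (h i)) \<and>
        (\<forall>x\<in>M. vf_apply X (fs!j) x = (\<Sum>i<length fs. h i x * (fs!i) x))))"

definition linear_darboux_family ::
  "'a::euclidean_space set \<Rightarrow> ('a \<Rightarrow> 'a) set \<Rightarrow> ('a \<Rightarrow> real) set \<Rightarrow> bool" where
  "linear_darboux_family M V A \<longleftrightarrow> (\<exists>fs::('a \<Rightarrow> real) list.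
     (\<forall>f\<in>set fs. smooth_on M f) \<and>
     A = {g. smooth_on M g \<and> (\<exists>c::nat \<Rightarrow> real. \<forall>x\<in>M. g x = (\<Sum>i<length fs. c i * (fs!i) x))} \<and>
     (\<forall>X\<in>V. \<forall>j<length fs. \<exists>h::nat \<Rightarrow> real.
        (\<forall>x\<in>M. vf_apply X (fs!j) x = (\<Sum>i<length fs. h i * (fs!i) x))))"

end

theory Submission
  imports Defs
begin



lemma fd_at: "(f has_derivative f') (at x) \<Longrightarrow> frechet_derivative f (at x) = f'"
  using frechet_derivative_at by metis

lemma Ck_mono: "Ck (Suc k) f \<Longrightarrow> Ck k f"
proof (induction k arbitrary: f)
  case 0
  then show ?case by (auto intro!: continuous_at_imp_continuous_on differentiable_imp_continuous_within)
next
  case (Suc k)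
  then show ?case by (metis Ck.simps(2))
qed

lemma Ck_const: "Ck k (\<lambda>x::'a::euclidean_space. c)"
proof (induction k arbitrary: c)
  case 0 then show ?case by simp
next
  case (Suc k)
  have "frechet_derivative (\<lambda>x::'a. c) (at x) = (\<lambda>h. 0)" for x
    by (rule fd_at) (rule has_derivative_const)
  then show ?case using Suc by simp
qed

lemma Ck_add: "Ck k f \<Longrightarrow> Ck k g \<Longrightarrow> Ck k (\<lambda>x::'a::euclidean_space. f x + g x)"
proof (induction k arbitrary: f g)
  case 0 then show ?case by (auto intro: continuous_on_add)
next
  case (Suc k)
  have d: "frechet_derivative (\<lambda>x. f x + g x) (at x) = (\<lambda>h. frechet_derivative f (at x) h + frechet_derivative g (at x) h)" for x
    using Suc.prems by (intro fd_at has_derivative_add) (auto intro: frechet_derivative_works[THEN iffD1])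
  show ?case using Suc by (auto simp: d)
qed

lemma Ck_mult: "Ck k f \<Longrightarrow> Ck k g \<Longrightarrow> Ck k (\<lambda>x::'a::euclidean_space. f x * g x)"
proof (induction k arbitrary: f g)
  case 0 then show ?case by (auto intro: continuous_on_mult)
next
  case (Suc k)
  have d: "frechet_derivative (\<lambda>x. f x * g x) (at x) = (\<lambda>h. f x * frechet_derivative g (at x) h + frechet_derivative f (at x) h * g x)" for x
    using Suc.prems by (intro fd_at has_derivative_mult) (auto intro: frechet_derivative_works[THEN iffD1])
  have "Ck k f" "Ck k g" using Suc.prems Ck_mono by blast+
  then show ?case using Suc by (auto simp: d intro!: Suc.IH Ck_add)
qed

lemma Ck_sum: "finite S \<Longrightarrow> (\<And>i. i \<in> S \<Longrightarrow> Ck k (f i)) \<Longrightarrow> Ck k (\<lambda>x::'a::euclidean_space. \<Sum>i\<in>S. f i x)"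
  by (induction S rule: finite_induct) (auto intro: Ck_add Ck_const)

lemma Ck_linear: "linear l \<Longrightarrow> Ck k (l::'a::euclidean_space \<Rightarrow> real)"
proof (cases k)
  case 0
  assume "linear l"
  then show ?thesis using 0 by (auto intro: linear_continuous_on linear_conv_bounded_linear[THEN iffD1])
next
  case (Suc m)
  assume l: "linear l"
  then have bl: "bounded_linear l" using linear_conv_bounded_linear by blast
  have d: "frechet_derivative l (at x) = l" for x by (rule fd_at) (rule bounded_linear_imp_has_derivative[OF bl])
  have "l differentiable at x" for x using bl bounded_linear_imp_differentiable by blast
  then show ?thesis using Suc by (simp add: d Ck_const)
qed

lemma Cinf_Ck: "Cinf f \<Longrightarrow> Ck k f" by (simp add: Cinf_def)

lemma Ck_comp:
  fixes S :: "'a::euclidean_space \<Rightarrow> 'b::euclidean_space"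
  assumes dS: "\<And>x. (S has_derivative DS x) (at x)"
    and lin: "\<And>v. linear (\<lambda>x. DS x v)"
  shows "Cinf p \<Longrightarrow> Ck k G \<Longrightarrow> Ck k (\<lambda>x. p x * G (S x))"
proof (induction k arbitrary: p G)
  case 0
  have cS: "continuous_on UNIV S"
    using dS by (meson continuous_at_imp_continuous_on has_derivative_continuous)
  have "continuous_on UNIV (\<lambda>x. G (S x))"
    using continuous_on_compose[OF cS continuous_on_subset[of UNIV G "range S"]] 0 by (simp add: o_def)
  moreover have "continuous_on UNIV p" using Cinf_Ck[OF 0(1), of 0] by simp
  ultimately show ?case by (auto intro: continuous_on_mult)
next
  case (Suc k)
  have pd: "p differentiable at x" for x using Cinf_Ck[OF Suc.prems(1), of "Suc 0"] by simp
  have Gd: "G differentiable at y" for y using Suc.prems(2) by simp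
  let ?G' = "\<lambda>y. frechet_derivative G (at y)"
  let ?p' = "\<lambda>x. frechet_derivative p (at x)"
  have hd: "((\<lambda>x. p x * G (S x)) has_derivative (\<lambda>h. p x * ?G' (S x) (DS x h) + ?p' x h * G (S x))) (at x)" for x
    apply (rule has_derivative_mult)
     apply (rule frechet_derivative_works[THEN iffD1, OF pd])
    apply (rule has_derivative_compose[OF dS])
    apply (rule frechet_derivative_works[THEN iffD1, OF Gd])
    done
  have linG: "linear (?G' y)" for y
    using frechet_derivative_works[THEN iffD1, OF Gd] has_derivative_linear by blast
  have exp: "?G' y w = (\<Sum>b\<in>Basis. (w \<bullet> b) * ?G' y b)" for y w
  proof -
    have "?G' y w = ?G' y (\<Sum>b\<in>Basis. (w \<bullet> b) *\<^sub>R b)" by (simp add: euclidean_representation)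
    also have "\<dots> = (\<Sum>b\<in>Basis. (w \<bullet> b) * ?G' y b)"
      using linG[of y] by (simp add: linear_sum linear_scale)
    finally show ?thesis .
  qed
  have d: "frechet_derivative (\<lambda>x. p x * G (S x)) (at x) v =
      (\<Sum>b\<in>Basis. (p x * (DS x v \<bullet> b)) * (\<lambda>y. ?G' y b) (S x)) + ?p' x v * G (S x)" for x v
  proof -
    have "frechet_derivative (\<lambda>x. p x * G (S x)) (at x) v = p x * ?G' (S x) (DS x v) + ?p' x v * G (S x)"
      by (simp only: fd_at[OF hd])
    also have "\<dots> = p x * (\<Sum>b\<in>Basis. (DS x v \<bullet> b) * ?G' (S x) b) + ?p' x v * G (S x)"
      by (subst exp[of "S x" "DS x v"]) (rule refl)
    also have "\<dots> = (\<Sum>b\<in>Basis. (p x * (DS x v \<bullet> b)) * (\<lambda>y. ?G' y b) (S x)) + ?p' x v * G (S x)"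
      by (simp add: sum_distrib_left mult.assoc)
    finally show ?thesis .
  qed
  have dif: "(\<lambda>x. p x * G (S x)) differentiable at x" for x using hd by (auto simp: differentiable_def)
  have GCk: "Ck k G" using Suc.prems(2) Ck_mono by blast
  have p'inf: "Cinf (\<lambda>x. ?p' x v)" for v
    using Suc.prems(1) unfolding Cinf_def by (metis Ck.simps(2))
  have lininf: "Cinf (\<lambda>x. DS x v \<bullet> b)" for v b
    unfolding Cinf_def using lin[of v] by (auto intro!: Ck_linear linear_compose[of "\<lambda>x. DS x v" "\<lambda>w. w \<bullet> b", unfolded o_def] bounded_linear_inner_left[THEN bounded_linear.linear])
  have pinf: "Cinf (\<lambda>x. p x * (DS x v \<bullet> b))" for v b
    using Suc.prems(1) lininf unfolding Cinf_def by (auto intro: Ck_mult)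
  show ?case
    apply (simp only: Ck.simps dif simp_thms d)
    apply (intro allI Ck_add Ck_sum finite_Basis)
     apply (rule Suc.IH[OF pinf]) using Suc.prems(2) apply simp
    apply (rule Suc.IH[OF p'inf GCk])
    done
qed

lemma Cinf_comp:
  fixes S :: "'a::euclidean_space \<Rightarrow> 'b::euclidean_space"
  assumes dS: "\<And>x. (S has_derivative DS x) (at x)"
    and lin: "\<And>v. linear (\<lambda>x. DS x v)"
    and "Cinf G"
  shows "Cinf (\<lambda>x. G (S x))"
    unfolding Cinf_def
proof
  fix k show "Ck k (\<lambda>x. G (S x))"
    using Ck_comp[OF dS lin, of "\<lambda>x. 1" k G] assms(3) Ck_const unfolding Cinf_def by auto
qed




definition PP :: "(real^'n \<Rightarrow> real^'n \<Rightarrow> real^'n) \<Rightarrow> real^'n^'n \<Rightarrow> real^'n^'n \<Rightarrow> real^'n^'n^'n" where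
  "PP br r s = (\<chi> k b d. \<Sum>a\<in>UNIV. \<Sum>c\<in>UNIV. r$a$b * s$c$d * (br (axis a 1) (axis c 1))$k)"

definition QQ where "QQ br r s = alt3 (PP br r s)"

lemma schouten_QQ: "schouten_rr br r = QQ br r r"
  by (simp add: schouten_rr_def QQ_def PP_def)

lemma alt3_Lambda3: "alt3 T \<in> Lambda3"
  by (simp add: Lambda3_def alt3_def)

lemma Lambda3_lin:
  assumes "T \<in> Lambda3" "U \<in> Lambda3" shows "T + c *\<^sub>R U \<in> Lambda3"
proof -
  have t: "T$i$j$k = - T$j$i$k \<and> T$i$j$k = - T$i$k$j" for i j k using assms(1) unfolding Lambda3_def by blast
  have u: "U$i$j$k = - U$j$i$k \<and> U$i$j$k = - U$i$k$j" for i j k using assms(2) unfolding Lambda3_def by blast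
  show ?thesis unfolding Lambda3_def
  proof (intro CollectI allI conjI)
    fix i j k
    show "(T + c *\<^sub>R U)$i$j$k = - (T + c *\<^sub>R U)$j$i$k"
      using conjunct1[OF t[of i j k]] conjunct1[OF u[of i j k]] by simp
    show "(T + c *\<^sub>R U)$i$j$k = - (T + c *\<^sub>R U)$i$k$j"
      using conjunct2[OF t[of i j k]] conjunct2[OF u[of i j k]] by simp
  qed
qed

lemma alt3_add: "alt3 T + alt3 U = alt3 (T + U)"
  by (simp add: alt3_def vec_eq_iff algebra_simps)

lemma linear_alt3: "linear alt3"
  by (rule linearI) (simp_all add: alt3_def vec_eq_iff algebra_simps)

lemma bilinear_PP: "bilinear (PP br)"
  unfolding bilinear_def
  by (auto intro!: linearI simp: PP_def vec_eq_iff algebra_simps sum.distrib sum_distrib_left)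

lemma bilinear_QQ: "bilinear (QQ br)"
  using bilinear_PP[of br] linear_alt3 unfolding bilinear_def QQ_def
  by (auto intro: linear_compose[unfolded o_def])

lemma QQ_deriv: "((\<lambda>r. QQ br r r) has_derivative (\<lambda>v. QQ br r v + QQ br v r)) (at r)"
proof -
  have bb: "bounded_bilinear (QQ br)" using bilinear_QQ bilinear_conv_bounded_bilinear by blast
  have "((\<lambda>r. QQ br r r) has_derivative (\<lambda>v. QQ br r (id v) + QQ br (id v) r)) (at r)"
    using bounded_bilinear.FDERIV[OF bb, of id id r UNIV id id] by (simp add: id_def)
  then show ?thesis by simp
qed

lemma QQ_deriv_lin: "linear (\<lambda>x. QQ br x v + QQ br v x)"
  using bilinear_QQ[of br] unfolding bilinear_def
  by (auto intro!: linear_compose_add)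

lemma lam3_alt3: "lam3 d (alt3 T) = alt3 (lam3 d T)"
  unfolding vec_eq_iff
proof (intro allI)
  fix x y z
  show "lam3 d (alt3 T) $ x $ y $ z = alt3 (lam3 d T) $ x $ y $ z"
    apply (simp only: alt3_def lam3_def vec_lambda_beta)
    apply (simp only: right_diff_distrib distrib_left sum_subtractf sum.distrib)
    done
qed

lemma linear_expand: "linear f \<Longrightarrow> f x = (\<Sum>i\<in>UNIV. x$i *\<^sub>R f (axis i 1::real^'n))"
proof -
  assume f: "linear f"
  have "f x = f (\<Sum>i\<in>UNIV. x$i *\<^sub>R axis i 1)"
    using basis_expansion[of x] by (simp add: scalar_mult_eq_scaleR)
  also have "\<dots> = (\<Sum>i\<in>UNIV. x$i *\<^sub>R f (axis i 1::real^'n))"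
    using f by (simp add: linear_sum linear_scale)
  finally show ?thesis .
qed

lemma deriv_coord:
  assumes "lie_algebra br" "derivation br d"
  shows "(\<Sum>m\<in>UNIV. d (axis m 1) $ k * br (axis a 1) (axis c 1) $ m) =
         (\<Sum>a'\<in>UNIV. d (axis a 1) $ a' * br (axis a' 1) (axis c 1) $ k)
       + (\<Sum>c'\<in>UNIV. d (axis c 1) $ c' * br (axis a 1) (axis c' 1) $ k)"
proof -
  have bl: "bilinear br" and dl: "linear d" and dd: "\<And>x y. d (br x y) = br (d x) y + br x (d y)"
    using assms unfolding lie_algebra_def derivation_def by blast+
  have l1: "linear (\<lambda>x. br x y)" for y using bl unfolding bilinear_def by blast
  have l2: "linear (br x)" for x using bl unfolding bilinear_def by blast
  have e1: "d (br (axis a 1) (axis c 1)) $ k = (\<Sum>m\<in>UNIV. br (axis a 1) (axis c 1) $ m * d (axis m 1) $ k)"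
    using arg_cong[OF linear_expand[OF dl, of "br (axis a 1) (axis c 1)"], of "\<lambda>v. v $ k"]
    by (simp only: sum_component vector_scaleR_component real_scaleR_def)
  have e2: "br (d (axis a 1)) (axis c 1) $ k = (\<Sum>a'\<in>UNIV. d (axis a 1) $ a' * br (axis a' 1) (axis c 1) $ k)"
    using arg_cong[OF linear_expand[OF l1[of "axis c 1"], of "d (axis a 1)"], of "\<lambda>v. v $ k"]
    by (simp only: sum_component vector_scaleR_component real_scaleR_def)
  have e3: "br (axis a 1) (d (axis c 1)) $ k = (\<Sum>c'\<in>UNIV. d (axis c 1) $ c' * br (axis a 1) (axis c' 1) $ k)"
    using arg_cong[OF linear_expand[OF l2[of "axis a 1"], of "d (axis c 1)"], of "\<lambda>v. v $ k"]
    by (simp only: sum_component vector_scaleR_component real_scaleR_def)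
  have "d (br (axis a 1) (axis c 1)) $ k = br (d (axis a 1)) (axis c 1) $ k + br (axis a 1) (d (axis c 1)) $ k"
    using dd[of "axis a 1" "axis c 1"] by (simp only: vector_add_component)
  then show ?thesis unfolding e1 e2 e3 by (simp only: mult.commute)
qed




lemma sum_rot3: "(\<Sum>a\<in>A. \<Sum>c\<in>C. \<Sum>m\<in>M. f a c m) = (\<Sum>m\<in>M. \<Sum>a\<in>A. \<Sum>c\<in>C. f a c m)"
proof -
  have "(\<Sum>a\<in>A. \<Sum>c\<in>C. \<Sum>m\<in>M. f a c m) = (\<Sum>a\<in>A. \<Sum>m\<in>M. \<Sum>c\<in>C. f a c m)"
    by (rule sum.cong[OF refl], rule sum.swap)
  also have "\<dots> = (\<Sum>m\<in>M. \<Sum>a\<in>A. \<Sum>c\<in>C. f a c m)" by (rule sum.swap)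
  finally show ?thesis .
qed

lemma sum_swap13: "(\<Sum>a\<in>A. \<Sum>c\<in>C. \<Sum>m\<in>M. f a c m) = (\<Sum>m\<in>M. \<Sum>c\<in>C. \<Sum>a\<in>A. f a c m)"
proof -
  have "(\<Sum>a\<in>A. \<Sum>c\<in>C. \<Sum>m\<in>M. f a c m) = (\<Sum>m\<in>M. \<Sum>a\<in>A. \<Sum>c\<in>C. f a c m)" by (rule sum_rot3)
  also have "\<dots> = (\<Sum>m\<in>M. \<Sum>c\<in>C. \<Sum>a\<in>A. f a c m)"
    by (rule sum.cong[OF refl], rule sum.swap)
  finally show ?thesis .
qed

lemma coord_identity:
  fixes r D :: "'n::finite \<Rightarrow> 'n \<Rightarrow> real" and B :: "'n \<Rightarrow> 'n \<Rightarrow> 'n \<Rightarrow> real"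
  assumes der: "\<And>k a c. (\<Sum>m\<in>UNIV. D k m * B a c m) = (\<Sum>a'\<in>UNIV. D a' a * B a' c k) + (\<Sum>c'\<in>UNIV. D c' c * B a c' k)"
  defines "X \<equiv> \<lambda>i j. (\<Sum>a'\<in>UNIV. D i a' * r a' j) + (\<Sum>b'\<in>UNIV. r i b' * D j b')"
  shows "(\<Sum>a\<in>UNIV. \<Sum>c\<in>UNIV. r a b * X c d * B a c k) + (\<Sum>a\<in>UNIV. \<Sum>c\<in>UNIV. X a b * r c d * B a c k)
    = (\<Sum>m\<in>UNIV. D k m * (\<Sum>a\<in>UNIV. \<Sum>c\<in>UNIV. r a b * r c d * B a c m))
    + (\<Sum>m\<in>UNIV. D b m * (\<Sum>a\<in>UNIV. \<Sum>c\<in>UNIV. r a m * r c d * B a c k))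
    + (\<Sum>m\<in>UNIV. D d m * (\<Sum>a\<in>UNIV. \<Sum>c\<in>UNIV. r a b * r c m * B a c k))"
proof -
  have T1: "(\<Sum>a\<in>UNIV. \<Sum>c\<in>UNIV. r a b * (\<Sum>a'\<in>UNIV. D c a' * r a' d) * B a c k)
     = (\<Sum>a\<in>UNIV. \<Sum>c\<in>UNIV. r a b * r c d * (\<Sum>c'\<in>UNIV. D c' c * B a c' k))"
  proof -
    have "(\<Sum>a\<in>UNIV. \<Sum>c\<in>UNIV. r a b * (\<Sum>a'\<in>UNIV. D c a' * r a' d) * B a c k)
       = (\<Sum>a\<in>UNIV. \<Sum>y\<in>UNIV. \<Sum>x\<in>UNIV. r a b * r x d * D y x * B a y k)"
      by (simp add: sum_distrib_left sum_distrib_right ac_simps)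
    also have "\<dots> = (\<Sum>a\<in>UNIV. \<Sum>x\<in>UNIV. \<Sum>y\<in>UNIV. r a b * r x d * D y x * B a y k)"
      by (rule sum.cong[OF refl], rule sum.swap)
    also have "\<dots> = (\<Sum>a\<in>UNIV. \<Sum>c\<in>UNIV. r a b * r c d * (\<Sum>c'\<in>UNIV. D c' c * B a c' k))"
      by (simp add: sum_distrib_left sum_distrib_right ac_simps)
    finally show ?thesis .
  qed
  have T2: "(\<Sum>a\<in>UNIV. \<Sum>c\<in>UNIV. r a b * (\<Sum>b'\<in>UNIV. r c b' * D d b') * B a c k)
     = (\<Sum>m\<in>UNIV. D d m * (\<Sum>a\<in>UNIV. \<Sum>c\<in>UNIV. r a b * r c m * B a c k))"
  proof -
    have "(\<Sum>a\<in>UNIV. \<Sum>c\<in>UNIV. r a b * (\<Sum>b'\<in>UNIV. r c b' * D d b') * B a c k)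
      = (\<Sum>a\<in>UNIV. \<Sum>c\<in>UNIV. \<Sum>m\<in>UNIV. D d m * (r a b * r c m * B a c k))"
      by (simp add: sum_distrib_left sum_distrib_right ac_simps)
    also have "\<dots> = (\<Sum>m\<in>UNIV. \<Sum>a\<in>UNIV. \<Sum>c\<in>UNIV. D d m * (r a b * r c m * B a c k))"
      by (rule sum_rot3)
    also have "\<dots> = (\<Sum>m\<in>UNIV. D d m * (\<Sum>a\<in>UNIV. \<Sum>c\<in>UNIV. r a b * r c m * B a c k))"
      by (simp add: sum_distrib_left ac_simps)
    finally show ?thesis .
  qed
  have T3: "(\<Sum>a\<in>UNIV. \<Sum>c\<in>UNIV. (\<Sum>a'\<in>UNIV. D a a' * r a' b) * r c d * B a c k)
     = (\<Sum>a\<in>UNIV. \<Sum>c\<in>UNIV. r a b * r c d * (\<Sum>a'\<in>UNIV. D a' a * B a' c k))"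
  proof -
    have "(\<Sum>a\<in>UNIV. \<Sum>c\<in>UNIV. (\<Sum>a'\<in>UNIV. D a a' * r a' b) * r c d * B a c k)
      = (\<Sum>y\<in>UNIV. \<Sum>c\<in>UNIV. \<Sum>x\<in>UNIV. D y x * r x b * r c d * B y c k)"
      by (simp add: sum_distrib_left sum_distrib_right ac_simps)
    also have "\<dots> = (\<Sum>x\<in>UNIV. \<Sum>c\<in>UNIV. \<Sum>y\<in>UNIV. D y x * r x b * r c d * B y c k)"
      by (rule sum_swap13)
    also have "\<dots> = (\<Sum>a\<in>UNIV. \<Sum>c\<in>UNIV. r a b * r c d * (\<Sum>a'\<in>UNIV. D a' a * B a' c k))"
      by (simp add: sum_distrib_left sum_distrib_right ac_simps)
    finally show ?thesis .
  qed
  have T4: "(\<Sum>a\<in>UNIV. \<Sum>c\<in>UNIV. (\<Sum>b'\<in>UNIV. r a b' * D b b') * r c d * B a c k)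
     = (\<Sum>m\<in>UNIV. D b m * (\<Sum>a\<in>UNIV. \<Sum>c\<in>UNIV. r a m * r c d * B a c k))"
  proof -
    have "(\<Sum>a\<in>UNIV. \<Sum>c\<in>UNIV. (\<Sum>b'\<in>UNIV. r a b' * D b b') * r c d * B a c k)
      = (\<Sum>a\<in>UNIV. \<Sum>c\<in>UNIV. \<Sum>m\<in>UNIV. D b m * (r a m * r c d * B a c k))"
      by (simp add: sum_distrib_left sum_distrib_right ac_simps)
    also have "\<dots> = (\<Sum>m\<in>UNIV. \<Sum>a\<in>UNIV. \<Sum>c\<in>UNIV. D b m * (r a m * r c d * B a c k))"
      by (rule sum_rot3)
    also have "\<dots> = (\<Sum>m\<in>UNIV. D b m * (\<Sum>a\<in>UNIV. \<Sum>c\<in>UNIV. r a m * r c d * B a c k))"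
      by (simp add: sum_distrib_left ac_simps)
    finally show ?thesis .
  qed
  have R1: "(\<Sum>m\<in>UNIV. D k m * (\<Sum>a\<in>UNIV. \<Sum>c\<in>UNIV. r a b * r c d * B a c m))
     = (\<Sum>a\<in>UNIV. \<Sum>c\<in>UNIV. r a b * r c d * (\<Sum>m\<in>UNIV. D k m * B a c m))"
  proof -
    have "(\<Sum>m\<in>UNIV. D k m * (\<Sum>a\<in>UNIV. \<Sum>c\<in>UNIV. r a b * r c d * B a c m))
       = (\<Sum>m\<in>UNIV. \<Sum>a\<in>UNIV. \<Sum>c\<in>UNIV. D k m * (r a b * r c d * B a c m))"
      by (simp add: sum_distrib_left ac_simps)
    also have "\<dots> = (\<Sum>a\<in>UNIV. \<Sum>c\<in>UNIV. \<Sum>m\<in>UNIV. D k m * (r a b * r c d * B a c m))"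
      by (rule sum_rot3[symmetric])
    also have "\<dots> = (\<Sum>a\<in>UNIV. \<Sum>c\<in>UNIV. r a b * r c d * (\<Sum>m\<in>UNIV. D k m * B a c m))"
      by (simp add: sum_distrib_left ac_simps)
    finally show ?thesis .
  qed
  have "(\<Sum>a\<in>UNIV. \<Sum>c\<in>UNIV. r a b * X c d * B a c k) + (\<Sum>a\<in>UNIV. \<Sum>c\<in>UNIV. X a b * r c d * B a c k)
      = ((\<Sum>a\<in>UNIV. \<Sum>c\<in>UNIV. r a b * (\<Sum>a'\<in>UNIV. D c a' * r a' d) * B a c k)
        + (\<Sum>a\<in>UNIV. \<Sum>c\<in>UNIV. r a b * (\<Sum>b'\<in>UNIV. r c b' * D d b') * B a c k))
       + ((\<Sum>a\<in>UNIV. \<Sum>c\<in>UNIV. (\<Sum>a'\<in>UNIV. D a a' * r a' b) * r c d * B a c k)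
        + (\<Sum>a\<in>UNIV. \<Sum>c\<in>UNIV. (\<Sum>b'\<in>UNIV. r a b' * D b b') * r c d * B a c k))"
    unfolding X_def by (simp add: algebra_simps sum.distrib)
  also have "\<dots> = (\<Sum>a\<in>UNIV. \<Sum>c\<in>UNIV. r a b * r c d * (\<Sum>m\<in>UNIV. D k m * B a c m))
    + (\<Sum>m\<in>UNIV. D b m * (\<Sum>a\<in>UNIV. \<Sum>c\<in>UNIV. r a m * r c d * B a c k))
    + (\<Sum>m\<in>UNIV. D d m * (\<Sum>a\<in>UNIV. \<Sum>c\<in>UNIV. r a b * r c m * B a c k))"
    unfolding T1 T2 T3 T4 der by (simp add: algebra_simps sum.distrib)
  finally show ?thesis unfolding R1 .
qed




lemma PP_equiv:
  assumes "lie_algebra br" "derivation br d"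
  shows "PP br r (lam2 d r) + PP br (lam2 d r) r = lam3 d (PP br r r)"
proof -
  have der: "\<And>k a c. (\<Sum>m\<in>UNIV. d (axis m 1) $ k * br (axis a 1) (axis c 1) $ m) =
         (\<Sum>a'\<in>UNIV. d (axis a 1) $ a' * br (axis a' 1) (axis c 1) $ k)
       + (\<Sum>c'\<in>UNIV. d (axis c 1) $ c' * br (axis a 1) (axis c' 1) $ k)"
    using deriv_coord[OF assms] by blast
  show ?thesis
    unfolding vec_eq_iff
    using coord_identity[where r="\<lambda>i j. r$i$j" and D="\<lambda>i m. d (axis m 1) $ i"
        and B="\<lambda>a c k. br (axis a 1) (axis c 1) $ k", OF der]
    by (simp add: PP_def lam2_def lam3_def)
qed

lemma QQ_equiv:
  assumes "lie_algebra br" "derivation br d"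
  shows "QQ br r (lam2 d r) + QQ br (lam2 d r) r = lam3 d (QQ br r r)"
  unfolding QQ_def alt3_add PP_equiv[OF assms] lam3_alt3 ..

lemma deriv_lin:
  fixes g :: "real \<Rightarrow> real"
  assumes "(g has_derivative l) (at 0)" "linear l"
  shows "deriv g 0 = l 1"
proof -
  have "l = (\<lambda>h. l 1 * h)"
  proof
    fix h :: real
    have "l h = l (h *\<^sub>R 1)" by simp
    also have "\<dots> = h * l 1" using assms(2) by (simp only: linear_scale) simp
    finally show "l h = l 1 * h" by simp
  qed
  then have "DERIV g 0 :> l 1" using assms(1) unfolding has_field_derivative_def by simp
  then show ?thesis by (rule DERIV_imp_deriv)
qed

lemma S_in: "schouten_rr br r \<in> Lambda3"
  by (simp add: schouten_rr_def alt3_Lambda3)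

lemma vf_key:
  assumes lie: "lie_algebra br" and der: "derivation br d" and F: "Cinf F"
    and fF: "\<forall>T\<in>Lambda3. f T = F T"
  shows "vf_apply (lam2 d) (\<lambda>r. f (schouten_rr br r)) r = vf_apply (lam3 d) f (schouten_rr br r)"
proof -
  let ?X = "lam2 d r" and ?T = "QQ br r r"
  let ?W = "lam3 d ?T"
  have Weq: "QQ br r ?X + QQ br ?X r = ?W" by (rule QQ_equiv[OF lie der])
  have Fd: "F differentiable at y" for y using Cinf_Ck[OF F, of "Suc 0"] by simp
  have F': "(F has_derivative frechet_derivative F (at y)) (at y)" for y
    using Fd frechet_derivative_works by blast
  have linF: "linear (frechet_derivative F (at y))" for y using F' has_derivative_linear by blast
  have bQ: "bilinear (QQ br)" by (rule bilinear_QQ)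
  have linQ1: "linear (QQ br x)" for x using bQ by (simp add: bilinear_def)
  have linQ2: "linear (\<lambda>v. QQ br v x)" for x using bQ by (simp add: bilinear_def)
  have "vf_apply (lam2 d) (\<lambda>r. f (schouten_rr br r)) r = deriv (\<lambda>t. F (QQ br (r + t *\<^sub>R ?X) (r + t *\<^sub>R ?X))) 0"
    unfolding vf_apply_def
  proof -
    have fS: "f (QQ br x x) = F (QQ br x x)" for x using fF S_in[of br x] by (simp add: schouten_QQ)
    show "deriv (\<lambda>t. f (schouten_rr br (r + t *\<^sub>R lam2 d r))) 0 = deriv (\<lambda>t. F (QQ br (r + t *\<^sub>R ?X) (r + t *\<^sub>R ?X))) 0"
      by (simp add: schouten_QQ fS)
  qed
  also have "\<dots> = frechet_derivative F (at ?T) (QQ br r (1 *\<^sub>R ?X) + QQ br (1 *\<^sub>R ?X) r)"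
  proof (rule deriv_lin[where l="\<lambda>h. frechet_derivative F (at ?T) (QQ br r (h *\<^sub>R ?X) + QQ br (h *\<^sub>R ?X) r)"])
    have l: "((\<lambda>t::real. r + t *\<^sub>R ?X) has_derivative (\<lambda>h. h *\<^sub>R ?X)) (at 0)"
      by (auto intro!: derivative_eq_intros)
    have q: "((\<lambda>r. QQ br r r) has_derivative (\<lambda>v. QQ br (r + 0 *\<^sub>R ?X) v + QQ br v (r + 0 *\<^sub>R ?X))) (at (r + 0 *\<^sub>R ?X))"
      by (rule QQ_deriv)
    note c1 = has_derivative_compose[OF l q]
    show "((\<lambda>t. F (QQ br (r + t *\<^sub>R ?X) (r + t *\<^sub>R ?X))) has_derivative
       (\<lambda>h. frechet_derivative F (at ?T) (QQ br r (h *\<^sub>R ?X) + QQ br (h *\<^sub>R ?X) r))) (at 0)"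
      using has_derivative_compose[OF c1 F'[of "QQ br (r + 0 *\<^sub>R ?X) (r + 0 *\<^sub>R ?X)"]] by simp
    show "linear (\<lambda>h. frechet_derivative F (at ?T) (QQ br r (h *\<^sub>R ?X) + QQ br (h *\<^sub>R ?X) r))"
    proof -
      have sl: "linear (\<lambda>h::real. h *\<^sub>R ?X)" by (rule bounded_linear_scaleR_left[THEN bounded_linear.linear])
      have lA: "linear (\<lambda>h::real. QQ br r (h *\<^sub>R ?X))"
        using linear_compose[OF sl linQ1[of r]] by (simp add: o_def)
      have lB: "linear (\<lambda>h::real. QQ br (h *\<^sub>R ?X) r)"
        using linear_compose[OF sl linQ2[of r]] by (simp add: o_def)
      have lAB: "linear (\<lambda>h::real. QQ br r (h *\<^sub>R ?X) + QQ br (h *\<^sub>R ?X) r)"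
        by (rule linear_compose_add[OF lA lB])
      show ?thesis using linear_compose[OF lAB linF[of ?T]] by (simp add: o_def)
    qed
  qed
  also have "\<dots> = frechet_derivative F (at ?T) ?W" using Weq by simp
  finally have L: "vf_apply (lam2 d) (\<lambda>r. f (schouten_rr br r)) r = frechet_derivative F (at ?T) ?W" .
  have TW: "?T + t *\<^sub>R ?W \<in> Lambda3" for t
    unfolding QQ_def lam3_alt3 by (intro Lambda3_lin alt3_Lambda3)
  have "vf_apply (lam3 d) f (schouten_rr br r) = deriv (\<lambda>t. F (?T + t *\<^sub>R ?W)) 0"
    unfolding vf_apply_def schouten_QQ using fF TW by simp
  also have "\<dots> = frechet_derivative F (at ?T) (1 *\<^sub>R ?W)"
  proof (rule deriv_lin[where l="\<lambda>h. frechet_derivative F (at ?T) (h *\<^sub>R ?W)"])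
    have l: "((\<lambda>t::real. ?T + t *\<^sub>R ?W) has_derivative (\<lambda>h. h *\<^sub>R ?W)) (at 0)"
      by (auto intro!: derivative_eq_intros)
    show "((\<lambda>t. F (?T + t *\<^sub>R ?W)) has_derivative (\<lambda>h. frechet_derivative F (at ?T) (h *\<^sub>R ?W))) (at 0)"
      using has_derivative_compose[OF l F'[of "?T + 0 *\<^sub>R ?W"]] by simp
    show "linear (\<lambda>h. frechet_derivative F (at ?T) (h *\<^sub>R ?W))"
    proof -
      have sl: "linear (\<lambda>h::real. h *\<^sub>R ?W)" by (rule bounded_linear_scaleR_left[THEN bounded_linear.linear])
      show ?thesis using linear_compose[OF sl linF[of ?T]] by (simp add: o_def)
    qed
  qed
  finally have R: "vf_apply (lam3 d) f (schouten_rr br r) = frechet_derivative F (at ?T) (1 *\<^sub>R ?W)" .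
  show ?thesis by (simp only: L R scaleR_one)
qed

lemma smooth_comp:
  fixes br :: "real^'n \<Rightarrow> real^'n \<Rightarrow> real^'n"
  assumes "smooth_on Lambda3 f"
  shows "smooth_on Lambda2 (\<lambda>r. f (schouten_rr br r))"
proof -
  obtain F where F: "Cinf F" "\<forall>x\<in>Lambda3. F x = f x" using assms unfolding smooth_on_def by blast
  have "Cinf (\<lambda>r. F (QQ br r r))"
    by (rule Cinf_comp[OF QQ_deriv QQ_deriv_lin F(1)])
  moreover have "\<forall>r\<in>Lambda2. F (QQ br r r) = f (schouten_rr br r)"
  proof
    fix r :: "real^'n^'n" assume "r \<in> Lambda2"
    show "F (QQ br r r) = f (schouten_rr br r)" using F(2) S_in[of br r] by (simp add: schouten_QQ)
  qed
  ultimately show ?thesis unfolding smooth_on_def by blast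
qed




lemma smooth_on_sum:
  fixes n :: nat
  assumes "\<forall>i<n. smooth_on M (f i)"
  shows "smooth_on M (\<lambda>x. \<Sum>i<n. c i * f i x)"
proof -
  have "\<forall>i\<in>{..<n}. \<exists>F. Cinf F \<and> (\<forall>x\<in>M. F x = f i x)" using assms unfolding smooth_on_def by auto
  then obtain F where F: "\<forall>i\<in>{..<n}. Cinf (F i) \<and> (\<forall>x\<in>M. F i x = f i x)" by metis
  have "Cinf (\<lambda>x. \<Sum>i<n. c i * F i x)"
    unfolding Cinf_def
  proof
    fix k
    show "Ck k (\<lambda>x. \<Sum>i<n. c i * F i x)"
      by (rule Ck_sum) (use F in \<open>auto intro!: Ck_mult Ck_const simp: Cinf_def\<close>)
  qed
  moreover have "\<forall>x\<in>M. (\<Sum>i<n. c i * F i x) = (\<Sum>i<n. c i * f i x)" using F by simp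
  ultimately show ?thesis unfolding smooth_on_def by blast
qed

lemma span_A:
  fixes br :: "real^'n \<Rightarrow> real^'n \<Rightarrow> real^'n"
  assumes sm: "\<forall>f\<in>set fs. smooth_on Lambda3 f"
   and A3: "A3 = {g. smooth_on Lambda3 g \<and> (\<exists>c::nat\<Rightarrow>real. \<forall>x\<in>Lambda3. g x = (\<Sum>i<length fs. c i * (fs!i) x))}"
  shows "{g. smooth_on Lambda2 g \<and> (\<exists>f\<in>A3. \<forall>r\<in>Lambda2. g r = f (schouten_rr br r))}
       = {g. smooth_on Lambda2 g \<and> (\<exists>c::nat\<Rightarrow>real. \<forall>x\<in>Lambda2. g x = (\<Sum>i<length (map (\<lambda>f r. f (schouten_rr br r)) fs). c i * (map (\<lambda>f r. f (schouten_rr br r)) fs ! i) x))}"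
    (is "?L = ?R")
proof
  show "?L \<subseteq> ?R"
  proof
    fix g assume "g \<in> ?L"
    then obtain f where g: "smooth_on Lambda2 g" "f \<in> A3" "\<forall>r\<in>Lambda2. g r = f (schouten_rr br r)" by blast
    obtain c where c: "\<forall>x\<in>Lambda3. f x = (\<Sum>i<length fs. c i * (fs!i) x)" using g(2) A3 by blast
    have "\<forall>x\<in>Lambda2. g x = (\<Sum>i<length fs. c i * (map (\<lambda>f r. f (schouten_rr br r)) fs ! i) x)"
    proof
      fix x :: "real^'n^'n" assume x: "x \<in> Lambda2"
      have "f (schouten_rr br x) = (\<Sum>i<length fs. c i * (fs!i) (schouten_rr br x))"
        using c S_in[of br x] by blast
      then show "g x = (\<Sum>i<length fs. c i * (map (\<lambda>f r. f (schouten_rr br r)) fs ! i) x)"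
        using g(3) x by simp
    qed
    then show "g \<in> ?R" using g(1) by auto
  qed
next
  show "?R \<subseteq> ?L"
  proof
    fix g assume "g \<in> ?R"
    then obtain c where g: "smooth_on Lambda2 g" "\<forall>x\<in>Lambda2. g x = (\<Sum>i<length fs. c i * (fs ! i) (schouten_rr br x))"
      by auto
    let ?f = "\<lambda>x. \<Sum>i<length fs. c i * (fs ! i) x"
    have "smooth_on Lambda3 ?f" using sm by (intro smooth_on_sum) auto
    then have "?f \<in> A3" using A3 by auto
    then show "g \<in> ?L" using g by auto
  qed
qed

theorem theorem5p2:
  fixes br :: "real^'n \<Rightarrow> real^'n \<Rightarrow> real^'n"
    and A3 :: "(real^'n^'n^'n \<Rightarrow> real) set"
  assumes "lie_algebra br"
    and "darboux_family Lambda3 (Vg3 br) A3"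
  defines "A \<equiv> {g. smooth_on Lambda2 g \<and>
                 (\<exists>f\<in>A3. \<forall>r\<in>Lambda2. g r = f (schouten_rr br r))}"
  shows "darboux_family Lambda2 (Vg br) A
         \<and> (linear_darboux_family Lambda3 (Vg3 br) A3 \<longrightarrow> linear_darboux_family Lambda2 (Vg br) A)"
proof
  note lie = assms(1)
  let ?m = "map (\<lambda>f r. f (schouten_rr br r))"
  show "darboux_family Lambda2 (Vg br) A"
  proof -
    obtain fs where sm: "\<forall>f\<in>set fs. smooth_on Lambda3 f"
      and A3: "A3 = {g. smooth_on Lambda3 g \<and> (\<exists>c::nat\<Rightarrow>real. \<forall>x\<in>Lambda3. g x = (\<Sum>i<length fs. c i * (fs!i) x))}"
      and cof: "\<forall>X\<in>Vg3 br. \<forall>j<length fs. \<exists>h::nat \<Rightarrow> real^'n^'n^'n \<Rightarrow> real.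
        (\<forall>i<length fs. smooth_on Lambda3 (h i)) \<and>
        (\<forall>x\<in>Lambda3. vf_apply X (fs!j) x = (\<Sum>i<length fs. h i x * (fs!i) x))"
      using assms(2) unfolding darboux_family_def by blast
    have "(\<forall>f\<in>set (?m fs). smooth_on Lambda2 f)" using sm smooth_comp by auto
    moreover have "A = {g. smooth_on Lambda2 g \<and> (\<exists>c::nat\<Rightarrow>real. \<forall>x\<in>Lambda2. g x = (\<Sum>i<length (?m fs). c i * (?m fs ! i) x))}"
      unfolding A_def by (rule span_A[OF sm A3])
    moreover have "\<forall>X\<in>Vg br. \<forall>j<length (?m fs). \<exists>h::nat \<Rightarrow> real^'n^'n \<Rightarrow> real.
        (\<forall>i<length (?m fs). smooth_on Lambda2 (h i)) \<and>
        (\<forall>x\<in>Lambda2. vf_apply X (?m fs!j) x = (\<Sum>i<length (?m fs). h i x * (?m fs!i) x))"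
    proof (intro ballI allI impI)
      fix X j assume X: "X \<in> Vg br" and j: "j < length (?m fs)"
      obtain d where d: "derivation br d" "X = lam2 d" using X unfolding Vg_def by blast
      have "lam3 d \<in> Vg3 br" using d unfolding Vg3_def by blast
      then obtain h where h: "\<forall>i<length fs. smooth_on Lambda3 (h i)"
        "\<forall>x\<in>Lambda3. vf_apply (lam3 d) (fs!j) x = (\<Sum>i<length fs. h i x * (fs!i) x)"
        using bspec[OF cof \<open>lam3 d \<in> Vg3 br\<close>] j by auto
      have "smooth_on Lambda3 (fs!j)" using sm j by simp
      then obtain F where F: "Cinf F" "\<forall>x\<in>Lambda3. F x = (fs!j) x"
        unfolding smooth_on_def by blast
      show "\<exists>h::nat \<Rightarrow> real^'n^'n \<Rightarrow> real.
        (\<forall>i<length (?m fs). smooth_on Lambda2 (h i)) \<and>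
        (\<forall>x\<in>Lambda2. vf_apply X (?m fs!j) x = (\<Sum>i<length (?m fs). h i x * (?m fs!i) x))"
      proof (intro exI[of _ "\<lambda>i r. h i (schouten_rr br r)"] conjI ballI allI impI)
        fix i assume "i < length (?m fs)"
        then show "smooth_on Lambda2 (\<lambda>r. h i (schouten_rr br r))" using h(1) smooth_comp by auto
      next
        fix x :: "real^'n^'n" assume "x \<in> Lambda2"
        have "vf_apply X (?m fs!j) x = vf_apply (lam3 d) (fs!j) (schouten_rr br x)"
          using vf_key[OF lie d(1) F(1), of "fs!j" x] F(2) j d(2) by simp
        also have "\<dots> = (\<Sum>i<length fs. h i (schouten_rr br x) * (fs!i) (schouten_rr br x))"
          using h(2) S_in by blast
        finally show "vf_apply X (?m fs!j) x = (\<Sum>i<length (?m fs). h i (schouten_rr br x) * (?m fs!i) x)"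
          by simp
      qed
    qed
    ultimately show ?thesis unfolding darboux_family_def by blast
  qed
  show "linear_darboux_family Lambda3 (Vg3 br) A3 \<longrightarrow> linear_darboux_family Lambda2 (Vg br) A"
  proof
    assume "linear_darboux_family Lambda3 (Vg3 br) A3"
    then obtain fs where sm: "\<forall>f\<in>set fs. smooth_on Lambda3 f"
      and A3: "A3 = {g. smooth_on Lambda3 g \<and> (\<exists>c::nat\<Rightarrow>real. \<forall>x\<in>Lambda3. g x = (\<Sum>i<length fs. c i * (fs!i) x))}"
      and cof: "\<forall>X\<in>Vg3 br. \<forall>j<length fs. \<exists>h::nat \<Rightarrow> real.
        (\<forall>x\<in>Lambda3. vf_apply X (fs!j) x = (\<Sum>i<length fs. h i * (fs!i) x))"
      unfolding linear_darboux_family_def by blast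
    have "(\<forall>f\<in>set (?m fs). smooth_on Lambda2 f)" using sm smooth_comp by auto
    moreover have "A = {g. smooth_on Lambda2 g \<and> (\<exists>c::nat\<Rightarrow>real. \<forall>x\<in>Lambda2. g x = (\<Sum>i<length (?m fs). c i * (?m fs ! i) x))}"
      unfolding A_def by (rule span_A[OF sm A3])
    moreover have "\<forall>X\<in>Vg br. \<forall>j<length (?m fs). \<exists>h::nat \<Rightarrow> real.
        (\<forall>x\<in>Lambda2. vf_apply X (?m fs!j) x = (\<Sum>i<length (?m fs). h i * (?m fs!i) x))"
    proof (intro ballI allI impI)
      fix X j assume X: "X \<in> Vg br" and j: "j < length (?m fs)"
      obtain d where d: "derivation br d" "X = lam2 d" using X unfolding Vg_def by blast
      have "lam3 d \<in> Vg3 br" using d unfolding Vg3_def by blast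
      then obtain h where h:
        "\<forall>x\<in>Lambda3. vf_apply (lam3 d) (fs!j) x = (\<Sum>i<length fs. h i * (fs!i) x)"
        using bspec[OF cof \<open>lam3 d \<in> Vg3 br\<close>] j by auto
      have "smooth_on Lambda3 (fs!j)" using sm j by simp
      then obtain F where F: "Cinf F" "\<forall>x\<in>Lambda3. F x = (fs!j) x"
        unfolding smooth_on_def by blast
      show "\<exists>h::nat \<Rightarrow> real.
        (\<forall>x\<in>Lambda2. vf_apply X (?m fs!j) x = (\<Sum>i<length (?m fs). h i * (?m fs!i) x))"
      proof (intro exI[of _ h] ballI)
        fix x :: "real^'n^'n" assume "x \<in> Lambda2"
        have "vf_apply X (?m fs!j) x = vf_apply (lam3 d) (fs!j) (schouten_rr br x)"
          using vf_key[OF lie d(1) F(1), of "fs!j" x] F(2) j d(2) by simp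
        also have "\<dots> = (\<Sum>i<length fs. h i * (fs!i) (schouten_rr br x))"
          using h S_in by blast
        finally show "vf_apply X (?m fs!j) x = (\<Sum>i<length (?m fs). h i * (?m fs!i) x)"
          by simp
      qed
    qed
    ultimately show "linear_darboux_family Lambda2 (Vg br) A" unfolding linear_darboux_family_def by blast
  qed
qed


end
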